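(* Let $u_1\neq u_2$ be the roots of $B(u)$, $v_i=-A(u_i)=-q_1^2u_i-2q_1q_2$, and $w_i=v_i-\tfrac32(u_i^3-t_1u_i-t_3)$ for $i=1,2$. Put $$V_i=\tfrac13w_i^2-\frac{t_1t_2}{2}-\frac{3t_3^2}{4}-\tfrac32t_1t_3u_i-\tfrac34t_1^2u_i^2+t_2u_i^2+\tfrac32t_3u_i^3+\tfrac32t_1u_i^4-\tfrac34u_i^6 .$$ Then $(u_1,u_2,w_1,w_2)$ are canonical coordinates ($\{u_i,w_j\}=\delta_{ij}$, $\{u_1,u_2\}=\{w_1,w_2\}=0$), and the Hamiltonians take the St\"ackel form $$H_1=\frac{V_1-V_2}{u_1-u_2},\qquad H_2=\frac{u_2V_1-u_1V_2}{u_2-u_1}.$$ Equivalently, $w_i^2=\mathcal P(u_i)$ for $i=1,2$, where $$\mathcal P(u)=\frac94\Big(u^6-2t_1u^4-2t_3u^3+\big(t_1^2-\tfrac43t_2\big)u^2+2t_1t_3u+\tfrac23t_1t_2+t_3^2\Big)+3H_1u+3H_2 .$$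
   Context: $(q_1,q_2,p_1,p_2)$ carry the canonical bracket $\{q_i,p_j\}=\delta_{ij}$, $\{q_1,q_2\}=\{p_1,p_2\}=0$; $t_1,t_2,t_3$ are constants, $q_1\neq0$; $$B(u)=u^2-\frac{p_2-2q_2}{2q_1}u+\frac{q_1^2}{6}-\frac{t_1}{2}-\frac{p_1}{2q_1}+\frac{p_2^2/4-q_2^2+t_2}{2q_1^2},\qquad A(u)=q_1^2u+2q_1q_2,$$ $$H_1=\tfrac12p_1p_2-\frac{q_2}{4q_1}p_2^2+q_1^3q_2+\frac{q_2^3}{q_1}-t_1q_1q_2-\frac{t_2q_2}{q_1}-t_3q_1^2,$$ $$H_2=-\Big(\frac{p_2^2}{8q_1}+\frac{3t_2-3t_1q_1^2+q_1^4-3q_2^2}{6q_1}\Big)^2-\frac{t_1t_2}{2}+\frac14p_1^2-2t_3q_1q_2+\frac43q_1^2q_2^2 .$$ *)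

theory Defs
  imports "HOL-Analysis.Analysis"
begin

type_synonym ph = "complex \<times> complex \<times> complex \<times> complex"

definition q1c :: "ph \<Rightarrow> complex" where "q1c x = (case x of (a,b,c,d) \<Rightarrow> a)"
definition q2c :: "ph \<Rightarrow> complex" where "q2c x = (case x of (a,b,c,d) \<Rightarrow> b)"
definition p1c :: "ph \<Rightarrow> complex" where "p1c x = (case x of (a,b,c,d) \<Rightarrow> c)"
definition p2c :: "ph \<Rightarrow> complex" where "p2c x = (case x of (a,b,c,d) \<Rightarrow> d)"

definition d_q1 :: "(ph \<Rightarrow> complex) \<Rightarrow> ph \<Rightarrow> complex" where
  "d_q1 f x = (case x of (a,b,c,d) \<Rightarrow> deriv (\<lambda>z. f (z,b,c,d)) a)"
definition d_q2 :: "(ph \<Rightarrow> complex) \<Rightarrow> ph \<Rightarrow> complex" where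
  "d_q2 f x = (case x of (a,b,c,d) \<Rightarrow> deriv (\<lambda>z. f (a,z,c,d)) b)"
definition d_p1 :: "(ph \<Rightarrow> complex) \<Rightarrow> ph \<Rightarrow> complex" where
  "d_p1 f x = (case x of (a,b,c,d) \<Rightarrow> deriv (\<lambda>z. f (a,b,z,d)) c)"
definition d_p2 :: "(ph \<Rightarrow> complex) \<Rightarrow> ph \<Rightarrow> complex" where
  "d_p2 f x = (case x of (a,b,c,d) \<Rightarrow> deriv (\<lambda>z. f (a,b,c,z)) d)"

definition partially_diff :: "(ph \<Rightarrow> complex) \<Rightarrow> ph \<Rightarrow> bool" where
  "partially_diff f x = (case x of (a,b,c,d) \<Rightarrow>
      (\<lambda>z. f (z,b,c,d)) field_differentiable at a \<and>
      (\<lambda>z. f (a,z,c,d)) field_differentiable at b \<and>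
      (\<lambda>z. f (a,b,z,d)) field_differentiable at c \<and>
      (\<lambda>z. f (a,b,c,z)) field_differentiable at d)"

definition pbr :: "(ph \<Rightarrow> complex) \<Rightarrow> (ph \<Rightarrow> complex) \<Rightarrow> ph \<Rightarrow> complex" where
  "pbr f g x = d_q1 f x * d_p1 g x - d_p1 f x * d_q1 g x
             + d_q2 f x * d_p2 g x - d_p2 f x * d_q2 g x"

definition Bpol :: "complex \<Rightarrow> complex \<Rightarrow> complex \<Rightarrow> ph \<Rightarrow> complex" where
  "Bpol t1 t2 u x = (let q1 = q1c x; q2 = q2c x; p1 = p1c x; p2 = p2c x in
     u^2 - (p2 - 2*q2) / (2*q1) * u + q1^2/6 - t1/2 - p1/(2*q1)
       + (p2^2/4 - q2^2 + t2) / (2*q1^2))"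

definition Apol :: "complex \<Rightarrow> ph \<Rightarrow> complex" where
  "Apol u x = q1c x ^ 2 * u + 2 * q1c x * q2c x"

definition Ham1 :: "complex \<Rightarrow> complex \<Rightarrow> complex \<Rightarrow> ph \<Rightarrow> complex" where
  "Ham1 t1 t2 t3 x = (let q1 = q1c x; q2 = q2c x; p1 = p1c x; p2 = p2c x in
     p1*p2/2 - q2/(4*q1) * p2^2 + q1^3*q2 + q2^3/q1 - t1*q1*q2 - t2*q2/q1 - t3*q1^2)"

definition Ham2 :: "complex \<Rightarrow> complex \<Rightarrow> complex \<Rightarrow> ph \<Rightarrow> complex" where
  "Ham2 t1 t2 t3 x = (let q1 = q1c x; q2 = q2c x; p1 = p1c x; p2 = p2c x in
     - ((p2^2/(8*q1) + (3*t2 - 3*t1*q1^2 + q1^4 - 3*q2^2)/(6*q1))^2)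
     - t1*t2/2 + p1^2/4 - 2*t3*q1*q2 + 4/3*q1^2*q2^2)"

definition wfun :: "complex \<Rightarrow> complex \<Rightarrow> (ph \<Rightarrow> complex) \<Rightarrow> ph \<Rightarrow> complex" where
  "wfun t1 t3 u x = - Apol (u x) x - 3/2 * (u x ^ 3 - t1 * u x - t3)"

definition Vfun :: "complex \<Rightarrow> complex \<Rightarrow> complex \<Rightarrow> complex \<Rightarrow> complex \<Rightarrow> complex" where
  "Vfun t1 t2 t3 u w = w^2/3 - t1*t2/2 - 3*t3^2/4 - 3/2*t1*t3*u - 3/4*t1^2*u^2 + t2*u^2
      + 3/2*t3*u^3 + 3/2*t1*u^4 - 3/4*u^6"

definition Ppol :: "complex \<Rightarrow> complex \<Rightarrow> complex \<Rightarrow> complex \<Rightarrow> complex \<Rightarrow> complex \<Rightarrow> complex" where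
  "Ppol t1 t2 t3 h1 h2 u = 9/4 * (u^6 - 2*t1*u^4 - 2*t3*u^3 + (t1^2 - 4/3*t2)*u^2
      + 2*t1*t3*u + 2/3*t1*t2 + t3^2) + 3*h1*u + 3*h2"

end

theory Submission
  imports Defs
begin

lemma zero_deriv_local:
  assumes "open T" "z0 \<in> T" "\<And>z. z \<in> T \<Longrightarrow> h z = 0" "(h has_field_derivative E) (at z0)"
  shows "E = 0"
proof -
  have "((\<lambda>z. 0) has_field_derivative E) (at z0)"
    by (rule has_field_derivative_transform_within_open[OF assms(4) assms(1,2)]) (simp add: assms(3))
  moreover have "((\<lambda>z. 0) has_field_derivative 0) (at z0)" by simp
  ultimately show ?thesis by (rule DERIV_unique)
qed

lemma open_slice:
  assumes "open S" "\<And>z. continuous (at z) (e :: complex \<Rightarrow> ph)"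
  shows "open {z. e z \<in> S}"
proof -
  have "open (e -` S)" by (rule continuous_open_vimage[OF assms])
  thus ?thesis by (simp add: vimage_def)
qed

lemma dq1_u:
  assumes S: "open S" "(a,b,c,d) \<in> S" "\<And>x. x \<in> S \<Longrightarrow> q1c x \<noteq> 0"
    "\<And>x. x \<in> S \<Longrightarrow> Bpol t1 t2 (u x) x = 0" "partially_diff u (a,b,c,d)"
  shows "(2*u(a,b,c,d) - (d-2*b)/(2*a)) * d_q1 u (a,b,c,d) + ((d-2*b)/(2*a^2)*u(a,b,c,d) + a/3 + c/(2*a^2) - (d^2/4-b^2+t2)/a^3) = 0"
proof -
  define g where "g = (\<lambda>z. u(z,b,c,d))"
  define D where "D = d_q1 u (a,b,c,d)"
  have gd: "(g has_field_derivative D) (at a)"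
    using S(5) unfolding g_def D_def d_q1_def partially_diff_def
    by (simp add: DERIV_deriv_iff_field_differentiable)
  have a0: "a \<noteq> 0" using S(2,3) by (force simp: q1c_def)
  let ?h = "\<lambda>z. (g z)^2 - (d - 2*b)/(2*z) * g z + z^2/6 - t1/2 - c/(2*z) + (d^2/4 - b^2 + t2)/(2*z^2)"
  have ga: "g a = u(a,b,c,d)" by (simp add: g_def)
  have hd: "(?h has_field_derivative (2*g a - (d-2*b)/(2*a)) * D + ((d-2*b)/(2*a^2)*g a + a/3 + c/(2*a^2) - (d^2/4-b^2+t2)/a^3)) (at a)"
    using a0 gd
    apply (auto intro!: derivative_eq_intros)
    apply (simp add: field_simps power2_eq_square power3_eq_cube power4_eq_xxxx)
    done
  have op: "open {z. (z,b,c,d) \<in> S}" using S(1) by (rule open_slice) (intro continuous_intros)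
  have hz: "?h z = 0" if "z \<in> {z. (z,b,c,d) \<in> S}" for z
    using S(4)[of "(z,b,c,d)"] S(3)[of "(z,b,c,d)"] that unfolding g_def by (simp add: Bpol_def q1c_def q2c_def p1c_def p2c_def)
  have pt: "a \<in> {z. (z,b,c,d) \<in> S}" using S(2) by simp
  have "(2*g a - (d-2*b)/(2*a)) * D + ((d-2*b)/(2*a^2)*g a + a/3 + c/(2*a^2) - (d^2/4-b^2+t2)/a^3) = 0"
    by (rule zero_deriv_local[OF op pt hz hd])
  then show ?thesis unfolding ga D_def .
qed

lemma dq1_w:
  assumes "partially_diff u (a,b,c,d)"
  shows "d_q1 (wfun t1 t3 u) (a,b,c,d) = (-(a^2) - 3/2*(3*(u(a,b,c,d))^2 - t1)) * d_q1 u (a,b,c,d) + - 2*a*u(a,b,c,d) - 2*b"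
proof -
  define g where "g = (\<lambda>z. u(z,b,c,d))"
  define D where "D = d_q1 u (a,b,c,d)"
  have gd: "(g has_field_derivative D) (at a)"
    using assms unfolding g_def D_def d_q1_def partially_diff_def
    by (simp add: DERIV_deriv_iff_field_differentiable)
  have ga: "g a = u(a,b,c,d)" by (simp add: g_def)
  have eq: "(\<lambda>z. wfun t1 t3 u (z,b,c,d)) = (\<lambda>z. -(z^2 * g z + 2*z*b) - 3/2*(g z^3 - t1*g z - t3))"
    by (simp add: g_def wfun_def Apol_def q1c_def q2c_def)
  have "((\<lambda>z. wfun t1 t3 u (z,b,c,d)) has_field_derivative (-(a^2) - 3/2*(3*(g a)^2 - t1)) * D + - 2*a*g a - 2*b) (at a)"
    unfolding eq using gd
    apply (auto intro!: derivative_eq_intros)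
    apply (simp add: field_simps power2_eq_square power3_eq_cube power4_eq_xxxx)
    done
  then have "deriv (\<lambda>z. wfun t1 t3 u (z,b,c,d)) a = (-(a^2) - 3/2*(3*(g a)^2 - t1)) * D + - 2*a*g a - 2*b"
    by (rule DERIV_imp_deriv)
  then show ?thesis unfolding D_def by (simp add: d_q1_def g_def)
qed

lemma dq2_u:
  assumes S: "open S" "(a,b,c,d) \<in> S" "\<And>x. x \<in> S \<Longrightarrow> q1c x \<noteq> 0"
    "\<And>x. x \<in> S \<Longrightarrow> Bpol t1 t2 (u x) x = 0" "partially_diff u (a,b,c,d)"
  shows "(2*u(a,b,c,d) - (d-2*b)/(2*a)) * d_q2 u (a,b,c,d) + (u(a,b,c,d)/a - b/a^2) = 0"
proof -
  define g where "g = (\<lambda>z. u(a,z,c,d))"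
  define D where "D = d_q2 u (a,b,c,d)"
  have gd: "(g has_field_derivative D) (at b)"
    using S(5) unfolding g_def D_def d_q2_def partially_diff_def
    by (simp add: DERIV_deriv_iff_field_differentiable)
  have a0: "a \<noteq> 0" using S(2,3) by (force simp: q1c_def)
  let ?h = "\<lambda>z. (g z)^2 - (d - 2*z)/(2*a) * g z + a^2/6 - t1/2 - c/(2*a) + (d^2/4 - z^2 + t2)/(2*a^2)"
  have ga: "g b = u(a,b,c,d)" by (simp add: g_def)
  have hd: "(?h has_field_derivative (2*g b - (d-2*b)/(2*a)) * D + (g b/a - b/a^2)) (at b)"
    using a0 gd
    apply (auto intro!: derivative_eq_intros)
    apply (simp add: field_simps power2_eq_square power3_eq_cube power4_eq_xxxx)
    done
  have op: "open {z. (a,z,c,d) \<in> S}" using S(1) by (rule open_slice) (intro continuous_intros)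
  have hz: "?h z = 0" if "z \<in> {z. (a,z,c,d) \<in> S}" for z
    using S(4)[of "(a,z,c,d)"] S(3)[of "(a,z,c,d)"] that unfolding g_def by (simp add: Bpol_def q1c_def q2c_def p1c_def p2c_def)
  have pt: "b \<in> {z. (a,z,c,d) \<in> S}" using S(2) by simp
  have "(2*g b - (d-2*b)/(2*a)) * D + (g b/a - b/a^2) = 0"
    by (rule zero_deriv_local[OF op pt hz hd])
  then show ?thesis unfolding ga D_def .
qed

lemma dq2_w:
  assumes "partially_diff u (a,b,c,d)"
  shows "d_q2 (wfun t1 t3 u) (a,b,c,d) = (-(a^2) - 3/2*(3*(u(a,b,c,d))^2 - t1)) * d_q2 u (a,b,c,d) + - 2*a"
proof -
  define g where "g = (\<lambda>z. u(a,z,c,d))"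
  define D where "D = d_q2 u (a,b,c,d)"
  have gd: "(g has_field_derivative D) (at b)"
    using assms unfolding g_def D_def d_q2_def partially_diff_def
    by (simp add: DERIV_deriv_iff_field_differentiable)
  have ga: "g b = u(a,b,c,d)" by (simp add: g_def)
  have eq: "(\<lambda>z. wfun t1 t3 u (a,z,c,d)) = (\<lambda>z. -(a^2 * g z + 2*a*z) - 3/2*(g z^3 - t1*g z - t3))"
    by (simp add: g_def wfun_def Apol_def q1c_def q2c_def)
  have "((\<lambda>z. wfun t1 t3 u (a,z,c,d)) has_field_derivative (-(a^2) - 3/2*(3*(g b)^2 - t1)) * D + - 2*a) (at b)"
    unfolding eq using gd
    apply (auto intro!: derivative_eq_intros)
    apply (simp add: field_simps power2_eq_square power3_eq_cube power4_eq_xxxx)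
    done
  then have "deriv (\<lambda>z. wfun t1 t3 u (a,z,c,d)) b = (-(a^2) - 3/2*(3*(g b)^2 - t1)) * D + - 2*a"
    by (rule DERIV_imp_deriv)
  then show ?thesis unfolding D_def by (simp add: d_q2_def g_def)
qed

lemma dp1_u:
  assumes S: "open S" "(a,b,c,d) \<in> S" "\<And>x. x \<in> S \<Longrightarrow> q1c x \<noteq> 0"
    "\<And>x. x \<in> S \<Longrightarrow> Bpol t1 t2 (u x) x = 0" "partially_diff u (a,b,c,d)"
  shows "(2*u(a,b,c,d) - (d-2*b)/(2*a)) * d_p1 u (a,b,c,d) + (- 1/(2*a)) = 0"
proof -
  define g where "g = (\<lambda>z. u(a,b,z,d))"
  define D where "D = d_p1 u (a,b,c,d)"
  have gd: "(g has_field_derivative D) (at c)"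
    using S(5) unfolding g_def D_def d_p1_def partially_diff_def
    by (simp add: DERIV_deriv_iff_field_differentiable)
  have a0: "a \<noteq> 0" using S(2,3) by (force simp: q1c_def)
  let ?h = "\<lambda>z. (g z)^2 - (d - 2*b)/(2*a) * g z + a^2/6 - t1/2 - z/(2*a) + (d^2/4 - b^2 + t2)/(2*a^2)"
  have ga: "g c = u(a,b,c,d)" by (simp add: g_def)
  have hd: "(?h has_field_derivative (2*g c - (d-2*b)/(2*a)) * D + (- 1/(2*a))) (at c)"
    using a0 gd
    apply (auto intro!: derivative_eq_intros)
    apply (simp add: field_simps power2_eq_square power3_eq_cube power4_eq_xxxx)
    done
  have op: "open {z. (a,b,z,d) \<in> S}" using S(1) by (rule open_slice) (intro continuous_intros)
  have hz: "?h z = 0" if "z \<in> {z. (a,b,z,d) \<in> S}" for z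
    using S(4)[of "(a,b,z,d)"] S(3)[of "(a,b,z,d)"] that unfolding g_def by (simp add: Bpol_def q1c_def q2c_def p1c_def p2c_def)
  have pt: "c \<in> {z. (a,b,z,d) \<in> S}" using S(2) by simp
  have "(2*g c - (d-2*b)/(2*a)) * D + (- 1/(2*a)) = 0"
    by (rule zero_deriv_local[OF op pt hz hd])
  then show ?thesis unfolding ga D_def .
qed

lemma dp1_w:
  assumes "partially_diff u (a,b,c,d)"
  shows "d_p1 (wfun t1 t3 u) (a,b,c,d) = (-(a^2) - 3/2*(3*(u(a,b,c,d))^2 - t1)) * d_p1 u (a,b,c,d) + 0"
proof -
  define g where "g = (\<lambda>z. u(a,b,z,d))"
  define D where "D = d_p1 u (a,b,c,d)"
  have gd: "(g has_field_derivative D) (at c)"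
    using assms unfolding g_def D_def d_p1_def partially_diff_def
    by (simp add: DERIV_deriv_iff_field_differentiable)
  have ga: "g c = u(a,b,c,d)" by (simp add: g_def)
  have eq: "(\<lambda>z. wfun t1 t3 u (a,b,z,d)) = (\<lambda>z. -(a^2 * g z + 2*a*b) - 3/2*(g z^3 - t1*g z - t3))"
    by (simp add: g_def wfun_def Apol_def q1c_def q2c_def)
  have "((\<lambda>z. wfun t1 t3 u (a,b,z,d)) has_field_derivative (-(a^2) - 3/2*(3*(g c)^2 - t1)) * D + 0) (at c)"
    unfolding eq using gd
    apply (auto intro!: derivative_eq_intros)
    apply (simp add: field_simps power2_eq_square power3_eq_cube power4_eq_xxxx)
    done
  then have "deriv (\<lambda>z. wfun t1 t3 u (a,b,z,d)) c = (-(a^2) - 3/2*(3*(g c)^2 - t1)) * D + 0"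
    by (rule DERIV_imp_deriv)
  then show ?thesis unfolding D_def by (simp add: d_p1_def g_def)
qed

lemma dp2_u:
  assumes S: "open S" "(a,b,c,d) \<in> S" "\<And>x. x \<in> S \<Longrightarrow> q1c x \<noteq> 0"
    "\<And>x. x \<in> S \<Longrightarrow> Bpol t1 t2 (u x) x = 0" "partially_diff u (a,b,c,d)"
  shows "(2*u(a,b,c,d) - (d-2*b)/(2*a)) * d_p2 u (a,b,c,d) + (- u(a,b,c,d)/(2*a) + d/(4*a^2)) = 0"
proof -
  define g where "g = (\<lambda>z. u(a,b,c,z))"
  define D where "D = d_p2 u (a,b,c,d)"
  have gd: "(g has_field_derivative D) (at d)"
    using S(5) unfolding g_def D_def d_p2_def partially_diff_def
    by (simp add: DERIV_deriv_iff_field_differentiable)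
  have a0: "a \<noteq> 0" using S(2,3) by (force simp: q1c_def)
  let ?h = "\<lambda>z. (g z)^2 - (z - 2*b)/(2*a) * g z + a^2/6 - t1/2 - c/(2*a) + (z^2/4 - b^2 + t2)/(2*a^2)"
  have ga: "g d = u(a,b,c,d)" by (simp add: g_def)
  have hd: "(?h has_field_derivative (2*g d - (d-2*b)/(2*a)) * D + (- g d/(2*a) + d/(4*a^2))) (at d)"
    using a0 gd
    apply (auto intro!: derivative_eq_intros)
    apply (simp add: field_simps power2_eq_square power3_eq_cube power4_eq_xxxx)
    done
  have op: "open {z. (a,b,c,z) \<in> S}" using S(1) by (rule open_slice) (intro continuous_intros)
  have hz: "?h z = 0" if "z \<in> {z. (a,b,c,z) \<in> S}" for z
    using S(4)[of "(a,b,c,z)"] S(3)[of "(a,b,c,z)"] that unfolding g_def by (simp add: Bpol_def q1c_def q2c_def p1c_def p2c_def)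
  have pt: "d \<in> {z. (a,b,c,z) \<in> S}" using S(2) by simp
  have "(2*g d - (d-2*b)/(2*a)) * D + (- g d/(2*a) + d/(4*a^2)) = 0"
    by (rule zero_deriv_local[OF op pt hz hd])
  then show ?thesis unfolding ga D_def .
qed

lemma dp2_w:
  assumes "partially_diff u (a,b,c,d)"
  shows "d_p2 (wfun t1 t3 u) (a,b,c,d) = (-(a^2) - 3/2*(3*(u(a,b,c,d))^2 - t1)) * d_p2 u (a,b,c,d) + 0"
proof -
  define g where "g = (\<lambda>z. u(a,b,c,z))"
  define D where "D = d_p2 u (a,b,c,d)"
  have gd: "(g has_field_derivative D) (at d)"
    using assms unfolding g_def D_def d_p2_def partially_diff_def
    by (simp add: DERIV_deriv_iff_field_differentiable)
  have ga: "g d = u(a,b,c,d)" by (simp add: g_def)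
  have eq: "(\<lambda>z. wfun t1 t3 u (a,b,c,z)) = (\<lambda>z. -(a^2 * g z + 2*a*b) - 3/2*(g z^3 - t1*g z - t3))"
    by (simp add: g_def wfun_def Apol_def q1c_def q2c_def)
  have "((\<lambda>z. wfun t1 t3 u (a,b,c,z)) has_field_derivative (-(a^2) - 3/2*(3*(g d)^2 - t1)) * D + 0) (at d)"
    unfolding eq using gd
    apply (auto intro!: derivative_eq_intros)
    apply (simp add: field_simps power2_eq_square power3_eq_cube power4_eq_xxxx)
    done
  then have "deriv (\<lambda>z. wfun t1 t3 u (a,b,c,z)) d = (-(a^2) - 3/2*(3*(g d)^2 - t1)) * D + 0"
    by (rule DERIV_imp_deriv)
  then show ?thesis unfolding D_def by (simp add: d_p2_def g_def)
qed
definition Wf :: "complex \<Rightarrow> complex \<Rightarrow> complex \<Rightarrow> complex \<Rightarrow> complex \<Rightarrow> complex" where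
  "Wf t1 t3 a b U = -(a^2*U + 2*a*b) - 3/2*(U^3 - t1*U - t3)"

lemma ham2_alg:
  fixes a b c d U V t1 t2 t3 :: complex
  assumes a0: "a \<noteq> 0" and uv: "U \<noteq> V"
    and hd: "d = 2*a*(U+V) + 2*b"
    and hc: "c = a^3/3 - a*t1 + (d^2/4 - b^2 + t2)/a - 2*a*U*V"
  shows "- ((d^2/(8*a) + (3*t2 - 3*t1*a^2 + a^4 - 3*b^2)/(6*a))^2)
     - t1*t2/2 + c^2/4 - 2*t3*a*b + 4/3*a^2*b^2
     = (V * Vfun t1 t2 t3 U (Wf t1 t3 a b U) - U * Vfun t1 t2 t3 V (Wf t1 t3 a b V)) / (V - U)"
proof -
  have uv': "V - U \<noteq> 0" using uv by simp
  show ?thesis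
    unfolding hc hd Vfun_def Wf_def using a0 uv'
    by (simp add: field_simps eval_nat_numeral)
qed

lemma P_alg:
  fixes a b c d U V t1 t2 t3 :: complex
  assumes a0: "a \<noteq> 0" and uv: "U \<noteq> V"
    and hd: "d = 2*a*(U+V) + 2*b"
    and hc: "c = a^3/3 - a*t1 + (d^2/4 - b^2 + t2)/a - 2*a*U*V"
  shows "(Wf t1 t3 a b U)^2 = Ppol t1 t2 t3
     (c*d/2 - b/(4*a) * d^2 + a^3*b + b^3/a - t1*a*b - t2*b/a - t3*a^2)
     (- ((d^2/(8*a) + (3*t2 - 3*t1*a^2 + a^4 - 3*b^2)/(6*a))^2)
     - t1*t2/2 + c^2/4 - 2*t3*a*b + 4/3*a^2*b^2) U"
    unfolding hc hd Ppol_def Wf_def using a0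
    by (simp add: field_simps eval_nat_numeral)

definition pb4 :: "complex \<Rightarrow> complex \<Rightarrow> complex \<Rightarrow> complex \<Rightarrow> complex \<Rightarrow> complex \<Rightarrow> complex \<Rightarrow> complex \<Rightarrow> complex" where
  "pb4 fa fb fc fd ga gb gc gd = fa*gc - fc*ga + fb*gd - fd*gb"

definition Wu :: "complex \<Rightarrow> complex \<Rightarrow> complex \<Rightarrow> complex" where
  "Wu t1 a U = -(a^2) - 3/2*(3*U^2 - t1)"

lemma br_alg:
  fixes a b c d U V t1 t2 t3 :: complex
  assumes a0: "a \<noteq> 0" and e0: "e \<noteq> 0" and hv: "V = U - e"
    and hd: "d = 2*a*(U+V) + 2*b"
    and hc: "c = a^3/3 - a*t1 + (d^2/4 - b^2 + t2)/a - 2*a*U*V"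
    and D1a: "D1a = -((d-2*b)/(2*a^2)*U + a/3 + c/(2*a^2) - (d^2/4-b^2+t2)/a^3)/(U-V)"
    and D1b: "D1b = -(U/a - b/a^2)/(U-V)"
    and D1c: "D1c = - (- 1/(2*a))/(U-V)"
    and D1d: "D1d = - (- U/(2*a) + d/(4*a^2))/(U-V)"
    and D2a: "D2a = -((d-2*b)/(2*a^2)*V + a/3 + c/(2*a^2) - (d^2/4-b^2+t2)/a^3)/(V-U)"
    and D2b: "D2b = -(V/a - b/a^2)/(V-U)"
    and D2c: "D2c = - (- 1/(2*a))/(V-U)"
    and D2d: "D2d = - (- V/(2*a) + d/(4*a^2))/(V-U)"
  shows "pb4 D1a D1b D1c D1d (Wu t1 a U*D1a - 2*a*U - 2*b) (Wu t1 a U*D1b - 2*a) (Wu t1 a U*D1c) (Wu t1 a U*D1d) = 1"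
    and "pb4 D2a D2b D2c D2d (Wu t1 a V*D2a - 2*a*V - 2*b) (Wu t1 a V*D2b - 2*a) (Wu t1 a V*D2c) (Wu t1 a V*D2d) = 1"
    and "pb4 D1a D1b D1c D1d (Wu t1 a V*D2a - 2*a*V - 2*b) (Wu t1 a V*D2b - 2*a) (Wu t1 a V*D2c) (Wu t1 a V*D2d) = 0"
    and "pb4 D2a D2b D2c D2d (Wu t1 a U*D1a - 2*a*U - 2*b) (Wu t1 a U*D1b - 2*a) (Wu t1 a U*D1c) (Wu t1 a U*D1d) = 0"
    and "pb4 D1a D1b D1c D1d D2a D2b D2c D2d = 0"
    and "pb4 (Wu t1 a U*D1a - 2*a*U - 2*b) (Wu t1 a U*D1b - 2*a) (Wu t1 a U*D1c) (Wu t1 a U*D1d)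
             (Wu t1 a V*D2a - 2*a*V - 2*b) (Wu t1 a V*D2b - 2*a) (Wu t1 a V*D2c) (Wu t1 a V*D2d) = 0"
proof -
  have e1: "pb4 D1a D1b D1c D1d D2a D2b D2c D2d = 0"
    unfolding pb4_def D1a D1b D1c D1d D2a D2b D2c D2d hc hd hv using a0 e0
    by (simp add: field_simps eval_nat_numeral)
  show "pb4 D1a D1b D1c D1d (Wu t1 a U*D1a - 2*a*U - 2*b) (Wu t1 a U*D1b - 2*a) (Wu t1 a U*D1c) (Wu t1 a U*D1d) = 1"
    unfolding pb4_def D1a D1b D1c D1d hc hd hv using a0 e0
    by (simp add: field_simps eval_nat_numeral)
  show "pb4 D2a D2b D2c D2d (Wu t1 a V*D2a - 2*a*V - 2*b) (Wu t1 a V*D2b - 2*a) (Wu t1 a V*D2c) (Wu t1 a V*D2d) = 1"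
    unfolding pb4_def D2a D2b D2c D2d hc hd hv using a0 e0
    by (simp add: field_simps eval_nat_numeral)
  have e3: "pb4 D1a D1b D1c D1d (Wu t1 a V*D2a - 2*a*V - 2*b) (Wu t1 a V*D2b - 2*a) (Wu t1 a V*D2c) (Wu t1 a V*D2d)
      = Wu t1 a V * pb4 D1a D1b D1c D1d D2a D2b D2c D2d + pb4 D1a D1b D1c D1d (- 2*a*V - 2*b) (- 2*a) 0 0"
    unfolding pb4_def by (simp add: algebra_simps)
  have e3': "pb4 D1a D1b D1c D1d (- 2*a*V - 2*b) (- 2*a) 0 0 = 0"
    unfolding pb4_def D1a D1b D1c D1d hc hd hv using a0 e0
    by (simp add: field_simps eval_nat_numeral)
  show "pb4 D1a D1b D1c D1d (Wu t1 a V*D2a - 2*a*V - 2*b) (Wu t1 a V*D2b - 2*a) (Wu t1 a V*D2c) (Wu t1 a V*D2d) = 0"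
    using e1 e3 e3' by simp
  have e4: "pb4 D2a D2b D2c D2d (Wu t1 a U*D1a - 2*a*U - 2*b) (Wu t1 a U*D1b - 2*a) (Wu t1 a U*D1c) (Wu t1 a U*D1d)
      = - Wu t1 a U * pb4 D1a D1b D1c D1d D2a D2b D2c D2d + pb4 D2a D2b D2c D2d (- 2*a*U - 2*b) (- 2*a) 0 0"
    unfolding pb4_def by (simp add: algebra_simps)
  have e4': "pb4 D2a D2b D2c D2d (- 2*a*U - 2*b) (- 2*a) 0 0 = 0"
    unfolding pb4_def D2a D2b D2c D2d hc hd hv using a0 e0
    by (simp add: field_simps eval_nat_numeral)
  show "pb4 D2a D2b D2c D2d (Wu t1 a U*D1a - 2*a*U - 2*b) (Wu t1 a U*D1b - 2*a) (Wu t1 a U*D1c) (Wu t1 a U*D1d) = 0"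
    using e1 e4 e4' by simp
  show "pb4 D1a D1b D1c D1d D2a D2b D2c D2d = 0" by (rule e1)
  have e6: "pb4 (Wu t1 a U*D1a - 2*a*U - 2*b) (Wu t1 a U*D1b - 2*a) (Wu t1 a U*D1c) (Wu t1 a U*D1d)
             (Wu t1 a V*D2a - 2*a*V - 2*b) (Wu t1 a V*D2b - 2*a) (Wu t1 a V*D2c) (Wu t1 a V*D2d)
      = Wu t1 a U * Wu t1 a V * pb4 D1a D1b D1c D1d D2a D2b D2c D2d
        + Wu t1 a U * pb4 D1a D1b D1c D1d (- 2*a*V - 2*b) (- 2*a) 0 0
        - Wu t1 a V * pb4 D2a D2b D2c D2d (- 2*a*U - 2*b) (- 2*a) 0 0
        + pb4 (- 2*a*U - 2*b) (- 2*a) 0 0 (- 2*a*V - 2*b) (- 2*a) 0 0"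
    unfolding pb4_def by (simp add: algebra_simps)
  show "pb4 (Wu t1 a U*D1a - 2*a*U - 2*b) (Wu t1 a U*D1b - 2*a) (Wu t1 a U*D1c) (Wu t1 a U*D1d)
             (Wu t1 a V*D2a - 2*a*V - 2*b) (Wu t1 a V*D2b - 2*a) (Wu t1 a V*D2c) (Wu t1 a V*D2d) = 0"
    using e6 e1 e3' e4' by (simp add: pb4_def)
qed
lemma ham1_alg:
  fixes a b c d U V t1 t2 t3 :: complex
  assumes a0: "a \<noteq> 0" and uv: "U \<noteq> V"
    and hd: "d = 2*a*(U+V) + 2*b"
    and hc: "c = a^3/3 - a*t1 + (d^2/4 - b^2 + t2)/a - 2*a*U*V"
  shows "c*d/2 - b/(4*a) * d^2 + a^3*b + b^3/a - t1*a*b - t2*b/a - t3*a^2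
     = (Vfun t1 t2 t3 U (Wf t1 t3 a b U) - Vfun t1 t2 t3 V (Wf t1 t3 a b V)) / (U - V)"
proof -
  have uv': "U - V \<noteq> 0" using uv by simp
  show ?thesis
    unfolding hc hd Vfun_def Wf_def using a0 uv'
    by (simp add: field_simps eval_nat_numeral)
qed

theorem mainTheorem9:
  fixes t1 t2 t3 :: complex
    and S :: "ph set"
    and u1 u2 :: "ph \<Rightarrow> complex"
  assumes "open S"
    and "\<And>x. x \<in> S \<Longrightarrow> q1c x \<noteq> 0"
    and "\<And>x. x \<in> S \<Longrightarrow> Bpol t1 t2 (u1 x) x = 0"
    and "\<And>x. x \<in> S \<Longrightarrow> Bpol t1 t2 (u2 x) x = 0"
    and "\<And>x. x \<in> S \<Longrightarrow> u1 x \<noteq> u2 x"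
    and "\<And>x. x \<in> S \<Longrightarrow> partially_diff u1 x"
    and "\<And>x. x \<in> S \<Longrightarrow> partially_diff u2 x"
  shows "\<forall>x\<in>S.
    (let w1 = wfun t1 t3 u1; w2 = wfun t1 t3 u2;
         V1 = Vfun t1 t2 t3 (u1 x) (w1 x); V2 = Vfun t1 t2 t3 (u2 x) (w2 x) in
      pbr u1 w1 x = 1 \<and> pbr u2 w2 x = 1 \<and> pbr u1 w2 x = 0 \<and> pbr u2 w1 x = 0 \<and>
      pbr u1 u2 x = 0 \<and> pbr w1 w2 x = 0 \<and>
      Ham1 t1 t2 t3 x = (V1 - V2) / (u1 x - u2 x) \<and>
      Ham2 t1 t2 t3 x = (u2 x * V1 - u1 x * V2) / (u2 x - u1 x) \<and>
      w1 x ^ 2 = Ppol t1 t2 t3 (Ham1 t1 t2 t3 x) (Ham2 t1 t2 t3 x) (u1 x) \<and>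
      w2 x ^ 2 = Ppol t1 t2 t3 (Ham1 t1 t2 t3 x) (Ham2 t1 t2 t3 x) (u2 x))"
proof
  fix x assume xS: "x \<in> S"
  obtain a b c d where xe: "x = (a,b,c,d)" by (cases x) auto
  define U where "U = u1 (a,b,c,d)"
  define V where "V = u2 (a,b,c,d)"
  have S2: "(a,b,c,d) \<in> S" using xS xe by simp
  have a0: "a \<noteq> 0" using assms(2)[OF xS] xe by (simp add: q1c_def)
  have uv: "U \<noteq> V" using assms(5)[OF xS] xe by (simp add: U_def V_def)
  have e0: "U - V \<noteq> 0" using uv by simp
  have B1: "U^2 - (d-2*b)/(2*a)*U + a^2/6 - t1/2 - c/(2*a) + (d^2/4-b^2+t2)/(2*a^2) = 0"
    using assms(3)[OF xS] xe by (simp add: U_def Bpol_def q1c_def q2c_def p1c_def p2c_def)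
  have B2: "V^2 - (d-2*b)/(2*a)*V + a^2/6 - t1/2 - c/(2*a) + (d^2/4-b^2+t2)/(2*a^2) = 0"
    using assms(4)[OF xS] xe by (simp add: V_def Bpol_def q1c_def q2c_def p1c_def p2c_def)
  define s where "s = (d-2*b)/(2*a)"
  define K where "K = a^2/6 - t1/2 - c/(2*a) + (d^2/4-b^2+t2)/(2*a^2)"
  have B1': "U^2 - s*U + K = 0" using B1 unfolding s_def K_def by (simp add: algebra_simps)
  have B2': "V^2 - s*V + K = 0" using B2 unfolding s_def K_def by (simp add: algebra_simps)
  have "(U - V) * (U + V - s) = (U^2 - s*U + K) - (V^2 - s*V + K)"
    by (simp add: algebra_simps power2_eq_square)
  then have "(U - V) * (U + V - s) = 0" using B1' B2' by simp
  then have hs0: "s = U + V" using e0 by simp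
  then have hs: "(d-2*b)/(2*a) = U + V" unfolding s_def .
  then have hd: "d = 2*a*(U+V) + 2*b" using a0 by (simp add: field_simps)
  have "K - U*V = U^2 - s*U + K" unfolding hs0 by (simp add: algebra_simps power2_eq_square)
  then have "K = U*V" using B1' by simp
  then have cK: "c/(2*a) = a^2/6 - t1/2 + (d^2/4-b^2+t2)/(2*a^2) - U*V"
    unfolding K_def by (simp add: algebra_simps)
  have "c = 2*a*(c/(2*a))" using a0 by simp
  also have "... = a^3/3 - a*t1 + (d^2/4 - b^2 + t2)/a - 2*a*U*V"
    unfolding cK using a0 by (simp add: field_simps power2_eq_square power3_eq_cube)
  finally have hc: "c = a^3/3 - a*t1 + (d^2/4 - b^2 + t2)/a - 2*a*U*V" .
  have s1: "2*U - (d-2*b)/(2*a) = U - V" using hs by simp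
  have s2: "2*V - (d-2*b)/(2*a) = V - U" using hs by simp
  note pd1 = assms(6)[OF xS, unfolded xe] and pd2 = assms(7)[OF xS, unfolded xe]
  note A = assms(1) S2 assms(2)
  have eqD: "D = - B / E" if "E * D + B = 0" "E \<noteq> 0" for D B E :: complex
    using that by (simp add: field_simps) (metis add.commute add_eq_0_iff)
  have e0': "V - U \<noteq> 0" using uv by simp
  note D1a = eqD[OF dq1_u[OF A assms(3) pd1, folded U_def, unfolded s1] e0]
  note D1b = eqD[OF dq2_u[OF A assms(3) pd1, folded U_def, unfolded s1] e0]
  note D1c = eqD[OF dp1_u[OF A assms(3) pd1, folded U_def, unfolded s1] e0]
  note D1d = eqD[OF dp2_u[OF A assms(3) pd1, folded U_def, unfolded s1] e0]
  note D2a = eqD[OF dq1_u[OF A assms(4) pd2, folded V_def, unfolded s2] e0']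
  note D2b = eqD[OF dq2_u[OF A assms(4) pd2, folded V_def, unfolded s2] e0']
  note D2c = eqD[OF dp1_u[OF A assms(4) pd2, folded V_def, unfolded s2] e0']
  note D2d = eqD[OF dp2_u[OF A assms(4) pd2, folded V_def, unfolded s2] e0']
  have hv: "V = U - (U - V)" by simp
  note BR = br_alg[OF a0 e0 hv hd hc]
  show "let w1 = wfun t1 t3 u1; w2 = wfun t1 t3 u2;
         V1 = Vfun t1 t2 t3 (u1 x) (w1 x); V2 = Vfun t1 t2 t3 (u2 x) (w2 x) in
      pbr u1 w1 x = 1 \<and> pbr u2 w2 x = 1 \<and> pbr u1 w2 x = 0 \<and> pbr u2 w1 x = 0 \<and>
      pbr u1 u2 x = 0 \<and> pbr w1 w2 x = 0 \<and>
      Ham1 t1 t2 t3 x = (V1 - V2) / (u1 x - u2 x) \<and>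
      Ham2 t1 t2 t3 x = (u2 x * V1 - u1 x * V2) / (u2 x - u1 x) \<and>
      w1 x ^ 2 = Ppol t1 t2 t3 (Ham1 t1 t2 t3 x) (Ham2 t1 t2 t3 x) (u1 x) \<and>
      w2 x ^ 2 = Ppol t1 t2 t3 (Ham1 t1 t2 t3 x) (Ham2 t1 t2 t3 x) (u2 x)"
    unfolding Let_def xe
  proof (intro conjI)
    have W: "wfun t1 t3 u1 (a,b,c,d) = Wf t1 t3 a b U" "wfun t1 t3 u2 (a,b,c,d) = Wf t1 t3 a b V"
      by (simp_all add: wfun_def Wf_def Apol_def q1c_def q2c_def U_def V_def)
    have H1: "Ham1 t1 t2 t3 (a,b,c,d) = c*d/2 - b/(4*a) * d^2 + a^3*b + b^3/a - t1*a*b - t2*b/a - t3*a^2"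
      by (simp add: Ham1_def q1c_def q2c_def p1c_def p2c_def)
    have H2: "Ham2 t1 t2 t3 (a,b,c,d) = - ((d^2/(8*a) + (3*t2 - 3*t1*a^2 + a^4 - 3*b^2)/(6*a))^2)
     - t1*t2/2 + c^2/4 - 2*t3*a*b + 4/3*a^2*b^2"
      by (simp add: Ham2_def q1c_def q2c_def p1c_def p2c_def)
    show "Ham1 t1 t2 t3 (a,b,c,d) = (Vfun t1 t2 t3 (u1 (a,b,c,d)) (wfun t1 t3 u1 (a,b,c,d))
        - Vfun t1 t2 t3 (u2 (a,b,c,d)) (wfun t1 t3 u2 (a,b,c,d))) / (u1 (a,b,c,d) - u2 (a,b,c,d))"
      unfolding W H1 U_def[symmetric] V_def[symmetric] by (rule ham1_alg[OF a0 uv hd hc])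
    show "Ham2 t1 t2 t3 (a,b,c,d) = (u2 (a,b,c,d) * Vfun t1 t2 t3 (u1 (a,b,c,d)) (wfun t1 t3 u1 (a,b,c,d))
        - u1 (a,b,c,d) * Vfun t1 t2 t3 (u2 (a,b,c,d)) (wfun t1 t3 u2 (a,b,c,d))) / (u2 (a,b,c,d) - u1 (a,b,c,d))"
      unfolding W H2 U_def[symmetric] V_def[symmetric] by (rule ham2_alg[OF a0 uv hd hc])
    show "(wfun t1 t3 u1 (a,b,c,d))^2 = Ppol t1 t2 t3 (Ham1 t1 t2 t3 (a,b,c,d)) (Ham2 t1 t2 t3 (a,b,c,d)) (u1 (a,b,c,d))"
      unfolding W H1 H2 U_def[symmetric] by (rule P_alg[OF a0 uv hd hc])
    have hd': "d = 2*a*(V+U) + 2*b" using hd by (simp add: add.commute)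
    have hc': "c = a^3/3 - a*t1 + (d^2/4 - b^2 + t2)/a - 2*a*V*U" using hc by (simp add: mult.commute mult.left_commute)
    show "(wfun t1 t3 u2 (a,b,c,d))^2 = Ppol t1 t2 t3 (Ham1 t1 t2 t3 (a,b,c,d)) (Ham2 t1 t2 t3 (a,b,c,d)) (u2 (a,b,c,d))"
      unfolding W H1 H2 V_def[symmetric] using uv by (intro P_alg[OF a0 _ hd' hc']) auto
    note DW = dq1_w[OF pd1] dq2_w[OF pd1] dp1_w[OF pd1] dp2_w[OF pd1]
              dq1_w[OF pd2] dq2_w[OF pd2] dp1_w[OF pd2] dp2_w[OF pd2]
    note DW' = DW[folded U_def V_def, folded Wu_def]
    show "pbr u1 (wfun t1 t3 u1) (a,b,c,d) = 1"
      unfolding pbr_def DW' using BR(1)[OF D1a D1b D1c D1d D2a D2b D2c D2d] by (simp add: pb4_def U_def V_def)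
    show "pbr u2 (wfun t1 t3 u2) (a,b,c,d) = 1"
      unfolding pbr_def DW' using BR(2)[OF D1a D1b D1c D1d D2a D2b D2c D2d] by (simp add: pb4_def U_def V_def)
    show "pbr u1 (wfun t1 t3 u2) (a,b,c,d) = 0"
      unfolding pbr_def DW' using BR(3)[OF D1a D1b D1c D1d D2a D2b D2c D2d] by (simp add: pb4_def U_def V_def)
    show "pbr u2 (wfun t1 t3 u1) (a,b,c,d) = 0"
      unfolding pbr_def DW' using BR(4)[OF D1a D1b D1c D1d D2a D2b D2c D2d] by (simp add: pb4_def U_def V_def)
    show "pbr u1 u2 (a,b,c,d) = 0"
      unfolding pbr_def using BR(5)[OF D1a D1b D1c D1d D2a D2b D2c D2d] by (simp add: pb4_def U_def V_def)
    show "pbr (wfun t1 t3 u1) (wfun t1 t3 u2) (a,b,c,d) = 0"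
      unfolding pbr_def DW' using BR(6)[OF D1a D1b D1c D1d D2a D2b D2c D2d] by (simp add: pb4_def U_def V_def)
  qed
qed
end
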